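(* VD satisfies stability: for every finite candidate set $C$, every profile $P$ over $C$ and every ballot $A\subseteq C$, $\mathrm{VD}(P)\cap\mathrm{VD}(P+\{A\})\neq\emptyset$. In contrast, for each $f\in\{\mathrm{MF},\mathrm{BC},\mathrm{MS},\mathrm{FT}\}$ there exist a finite candidate set $C$, a profile $P$ and a ballot $A$ over $C$ with $f(P)\cap f(P+\{A\})=\emptyset$.
   Context: Let $C$ be a finite set of candidates. An approval ballot is a nonempty subset $A\subseteq C$; a profile is a finite sequence of ballots; $P+\{A\}$ is $P$ with the ballot $A$ appended. An axis is a strict linear order $\triangleleft$ on $C$; $a\trianglelefteq b$ means $a\triangleleft b$ or $a=b$. A ballot $A$ is an interval of $\triangleleft$ if for all $a,b\in A$ and every $c$ with $a\triangleleft c\triangleleft b$ we have $c\in A$. For a cost function $\mathrm{cost}_f$, the associated scoring rule returns $f(P)=\arg\min_{\triangleleft}\sum_{A\in P}\mathrm{cost}_f(A,\triangleleft)$ over all axes on $C$. The five rules VD, MF, BC, MS, FT are the scoring rules with costs: $\mathrm{cost}_{\mathrm{VD}}(A,\triangleleft)=0$ if $A$ is an interval of $\triangleleft$ and $1$ otherwise; $\mathrm{cost}_{\mathrm{MF}}(A,\triangleleft)=\min_{x,y\in A,\ x\trianglelefteq y}\big(|\{z\in A: z\triangleleft x \text{ or } y\triangleleft z\}|+|\{z\notin A: x\triangleleft z\triangleleft y\}|\big)$; $\mathrm{cost}_{\mathrm{BC}}(A,\triangleleft)=|\{b\notin A: a\triangleleft b\triangleleft c \text{ for some } a,c\in A\}|$;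 $\mathrm{cost}_{\mathrm{MS}}(A,\triangleleft)=\sum_{x\in C\setminus A}\min\big(|\{y\in A:y\triangleleft x\}|,\,|\{y\in A:x\triangleleft y\}|\big)$; $\mathrm{cost}_{\mathrm{FT}}(A,\triangleleft)=\sum_{x\in C\setminus A}|\{y\in A:y\triangleleft x\}|\cdot|\{y\in A:x\triangleleft y\}|$. *)

theory Defs
  imports Main
begin

text \<open>Axes on a candidate set C: strict linear orders on C, as relations contained in C x C.
  A pair (a,b) in the relation means a is left of b on the axis.\<close>
definition axes :: "'a set \<Rightarrow> ('a \<times> 'a) set set" where
  "axes C = {r. strict_linear_order_on C r \<and> r \<subseteq> C \<times> C}"

definition is_ballot :: "'a set \<Rightarrow> 'a set \<Rightarrow> bool" where
  "is_ballot C A \<longleftrightarrow> A \<noteq> {} \<and> A \<subseteq> C"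

definition is_profile :: "'a set \<Rightarrow> 'a set list \<Rightarrow> bool" where
  "is_profile C P \<longleftrightarrow> (\<forall>A\<in>set P. is_ballot C A)"

definition is_interval :: "('a \<times> 'a) set \<Rightarrow> 'a set \<Rightarrow> bool" where
  "is_interval r A \<longleftrightarrow> (\<forall>a\<in>A. \<forall>b\<in>A. \<forall>c. (a, c) \<in> r \<and> (c, b) \<in> r \<longrightarrow> c \<in> A)"

definition cost_VD :: "'a set \<Rightarrow> 'a set \<Rightarrow> ('a \<times> 'a) set \<Rightarrow> nat" where
  "cost_VD C A r = (if is_interval r A then 0 else 1)"

definition cost_MF :: "'a set \<Rightarrow> 'a set \<Rightarrow> ('a \<times> 'a) set \<Rightarrow> nat" where
  "cost_MF C A r = Min ((\<lambda>(x, y). card {z \<in> A. (z, x) \<in> r \<or> (y, z) \<in> r}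
                                  + card {z \<in> C - A. (x, z) \<in> r \<and> (z, y) \<in> r})
                        ` {(x, y). x \<in> A \<and> y \<in> A \<and> (x = y \<or> (x, y) \<in> r)})"

definition cost_BC :: "'a set \<Rightarrow> 'a set \<Rightarrow> ('a \<times> 'a) set \<Rightarrow> nat" where
  "cost_BC C A r = card {b \<in> C - A. \<exists>a\<in>A. \<exists>c\<in>A. (a, b) \<in> r \<and> (b, c) \<in> r}"

definition cost_MS :: "'a set \<Rightarrow> 'a set \<Rightarrow> ('a \<times> 'a) set \<Rightarrow> nat" where
  "cost_MS C A r = (\<Sum>x\<in>C - A. min (card {y \<in> A. (y, x) \<in> r}) (card {y \<in> A. (x, y) \<in> r}))"

definition cost_FT :: "'a set \<Rightarrow> 'a set \<Rightarrow> ('a \<times> 'a) set \<Rightarrow> nat" where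
  "cost_FT C A r = (\<Sum>x\<in>C - A. card {y \<in> A. (y, x) \<in> r} * card {y \<in> A. (x, y) \<in> r})"

definition total_cost :: "('a set \<Rightarrow> 'a set \<Rightarrow> ('a \<times> 'a) set \<Rightarrow> nat) \<Rightarrow> 'a set \<Rightarrow> 'a set list \<Rightarrow> ('a \<times> 'a) set \<Rightarrow> nat" where
  "total_cost cost C P r = sum_list (map (\<lambda>A. cost C A r) P)"

definition scoring_rule :: "('a set \<Rightarrow> 'a set \<Rightarrow> ('a \<times> 'a) set \<Rightarrow> nat) \<Rightarrow> 'a set \<Rightarrow> 'a set list \<Rightarrow> ('a \<times> 'a) set set" where
  "scoring_rule cost C P = {r \<in> axes C. \<forall>r' \<in> axes C. total_cost cost C P r \<le> total_cost cost C P r'}"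

end

theory Submission
  imports Defs "HOL-Combinatorics.Multiset_Permutations"
begin

fun lt :: "'a list \<Rightarrow> 'a \<Rightarrow> 'a \<Rightarrow> bool" where
  "lt [] x y = False"
| "lt (z # zs) x y = ((x = z \<and> y \<in> set zs) \<or> lt zs x y)"

definition rel_of :: "'a list \<Rightarrow> ('a \<times> 'a) set" where
  "rel_of xs = {(x, y). lt xs x y}"

lemma lt_set: "lt xs x y \<Longrightarrow> x \<in> set xs \<and> y \<in> set xs"
  by (induction xs) auto

lemma lt_irrefl: "distinct xs \<Longrightarrow> \<not> lt xs x x"
  by (induction xs) (auto dest: lt_set)

lemma lt_trans: "distinct xs \<Longrightarrow> lt xs x y \<Longrightarrow> lt xs y z \<Longrightarrow> lt xs x z"
  by (induction xs) (auto dest: lt_set)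

lemma lt_total: "x \<in> set xs \<Longrightarrow> y \<in> set xs \<Longrightarrow> x \<noteq> y \<Longrightarrow> lt xs x y \<or> lt xs y x"
  by (induction xs) auto

lemma rel_of_axes: "distinct xs \<Longrightarrow> rel_of xs \<in> axes (set xs)"
  unfolding axes_def strict_linear_order_on_def rel_of_def
  by (auto simp: trans_def irrefl_def total_on_def dest: lt_set lt_irrefl lt_trans lt_total)

lemma min_elem:
  assumes "finite S" "S \<noteq> {}" "S \<subseteq> C" "r \<in> axes C"
  shows "\<exists>m\<in>S. \<forall>x\<in>S. x \<noteq> m \<longrightarrow> (m, x) \<in> r"
  using assms
proof (induction S rule: finite_ne_induct)
  case (singleton x) then show ?case by auto
next
  case (insert a S)
  then obtain m where m: "m \<in> S" "\<forall>x\<in>S. x \<noteq> m \<longrightarrow> (m, x) \<in> r" by auto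
  have tr: "trans r" and tot: "total_on C r"
    using insert.prems by (auto simp: axes_def strict_linear_order_on_def)
  have "a \<noteq> m" using m insert by auto
  then have "(a, m) \<in> r \<or> (m, a) \<in> r" using tot insert m unfolding total_on_def by auto
  then show ?case
  proof
    assume "(a, m) \<in> r"
    then show ?thesis using m tr by (auto dest: transD)
  next
    assume "(m, a) \<in> r"
    then show ?thesis using m by auto
  qed
qed

lemma axes_list:
  "finite C \<Longrightarrow> r \<in> axes C \<Longrightarrow> \<exists>xs. distinct xs \<and> set xs = C \<and> r = rel_of xs"
proof (induction "card C" arbitrary: C r)
  case 0
  then have "C = {}" by auto
  then have "r = {}" using 0 by (auto simp: axes_def)
  then show ?case using \<open>C = {}\<close> by (auto simp: rel_of_def)
next
  case (Suc n)
  then have ne: "C \<noteq> {}" by auto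
  obtain m where m: "m \<in> C" "\<forall>x\<in>C. x \<noteq> m \<longrightarrow> (m, x) \<in> r"
    using min_elem[OF Suc.prems(1) ne subset_refl Suc.prems(2)] by auto
  have tr: "trans r" and irr: "irrefl r" and tot: "total_on C r" and sub: "r \<subseteq> C \<times> C"
    using Suc.prems by (auto simp: axes_def strict_linear_order_on_def)
  define C' where "C' = C - {m}"
  define r' where "r' = r \<inter> (C' \<times> C')"
  have "r' \<in> axes C'"
    using tr irr tot unfolding axes_def strict_linear_order_on_def r'_def
    by (auto simp: trans_def irrefl_def total_on_def C'_def)
  moreover have "card C' = n" using Suc m by (simp add: C'_def)
  ultimately obtain xs' where xs': "distinct xs'" "set xs' = C'" "r' = rel_of xs'"
    using Suc.hyps(1)[of C' r'] Suc.prems by (auto simp: C'_def)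
  have "r = rel_of (m # xs')"
  proof (intro set_eqI iffI)
    fix p assume p: "p \<in> r"
    obtain a b where ab: "p = (a, b)" by (cases p)
    have abC: "a \<in> C" "b \<in> C" using sub p ab by auto
    show "p \<in> rel_of (m # xs')"
    proof (cases "a = m")
      case True
      then have "b \<noteq> m" using irr p ab by (auto simp: irrefl_def)
      then show ?thesis using True ab abC xs' by (auto simp: rel_of_def C'_def)
    next
      case False
      have "b \<noteq> m"
      proof
        assume "b = m"
        then have "(m, a) \<in> r" "(a, m) \<in> r" using m False abC p ab by auto
        then have "(m, m) \<in> r" using tr by (auto dest: transD)
        then show False using irr by (auto simp: irrefl_def)
      qed
      then have "(a, b) \<in> r'" using False abC p ab by (auto simp: r'_def C'_def)
      then show ?thesis using ab xs' by (auto simp: rel_of_def)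
    qed
  next
    fix p assume p: "p \<in> rel_of (m # xs')"
    obtain a b where ab: "p = (a, b)" by (cases p)
    show "p \<in> r"
    proof (cases "a = m \<and> b \<in> set xs'")
      case True then show ?thesis using m xs' ab by (auto simp: C'_def)
    next
      case False
      then have "lt xs' a b" using p ab by (auto simp: rel_of_def)
      then have "(a, b) \<in> r'" using xs' by (auto simp: rel_of_def)
      then show ?thesis using ab by (auto simp: r'_def)
    qed
  qed
  moreover have "distinct (m # xs')" using xs' by (auto simp: C'_def)
  moreover have "set (m # xs') = C" using xs' m by (auto simp: C'_def)
  ultimately show ?case by blast
qed

lemma axes_finite: "finite C \<Longrightarrow> finite (axes C)"
  by (rule finite_subset[of _ "Pow (C \<times> C)"]) (auto simp: axes_def)

lemma axes_ne: "finite C \<Longrightarrow> axes C \<noteq> {}"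
  using finite_distinct_list[of C] rel_of_axes by blast

lemma scoring_ne:
  assumes "finite C" shows "scoring_rule cost C P \<noteq> {}"
proof -
  let ?f = "total_cost cost C P"
  have fin: "finite (?f ` axes C)" using axes_finite[OF assms] by auto
  have ne: "?f ` axes C \<noteq> {}" using axes_ne[OF assms] by auto
  obtain r where r: "r \<in> axes C" "?f r = Min (?f ` axes C)"
    using Min_in[OF fin ne] by auto
  then have "r \<in> scoring_rule cost C P"
    unfolding scoring_rule_def using Min_le[OF fin] by auto
  then show ?thesis by auto
qed

lemma total_append:
  "total_cost cost C (P @ [A]) r = total_cost cost C P r + cost C A r"
  by (simp add: total_cost_def)

lemma VD_stable:
  assumes "finite C"
  shows "scoring_rule cost_VD C P \<inter> scoring_rule cost_VD C (P @ [A]) \<noteq> {}"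
proof -
  define S where "S = scoring_rule cost_VD C P"
  have finS: "finite S" using axes_finite[OF assms] by (auto simp: S_def scoring_rule_def)
  have neS: "S \<noteq> {}" using scoring_ne[OF assms] by (simp add: S_def)
  let ?g = "cost_VD C A"
  have fin: "finite (?g ` S)" using finS by auto
  have "Min (?g ` S) \<in> ?g ` S" using Min_in[OF fin] neS by auto
  then obtain r where r: "r \<in> S" "?g r = Min (?g ` S)" by (metis imageE)
  have rS: "\<And>r'. r' \<in> S \<Longrightarrow> ?g r \<le> ?g r'" using r Min_le[OF fin] by auto
  have rax: "r \<in> axes C" and rmin: "\<And>r'. r' \<in> axes C \<Longrightarrow> total_cost cost_VD C P r \<le> total_cost cost_VD C P r'"
    using r by (auto simp: S_def scoring_rule_def)
  have "r \<in> scoring_rule cost_VD C (P @ [A])"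
    unfolding scoring_rule_def
  proof (intro CollectI conjI ballI rax)
    fix r' assume r': "r' \<in> axes C"
    show "total_cost cost_VD C (P @ [A]) r \<le> total_cost cost_VD C (P @ [A]) r'"
    proof (cases "r' \<in> S")
      case True
      then have "total_cost cost_VD C P r' \<le> total_cost cost_VD C P r"
        using rax by (auto simp: S_def scoring_rule_def)
      then show ?thesis using rS[OF True] rmin[OF r'] by (simp add: total_append)
    next
      case False
      then obtain r'' where "r'' \<in> axes C" "total_cost cost_VD C P r' > total_cost cost_VD C P r''"
        using r' by (auto simp: S_def scoring_rule_def not_le)
      then have "total_cost cost_VD C P r' > total_cost cost_VD C P r" using rmin by force
      moreover have "?g r \<le> 1" by (simp add: cost_VD_def)
      ultimately show ?thesis by (simp add: total_append)
    qed
  qed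
  then show ?thesis using r by (auto simp: S_def)
qed



lemma card_filter_list:
  assumes "distinct xs" shows "card {z \<in> set xs. Q z} = length (filter Q xs)"
proof -
  have "{z \<in> set xs. Q z} = set (filter Q xs)" by auto
  then show ?thesis using assms distinct_card[of "filter Q xs"] by simp
qed

lemma card_sub_list:
  assumes "distinct xs" "A \<subseteq> set xs"
  shows "card {z \<in> A. Q z} = length (filter (\<lambda>z. z \<in> A \<and> Q z) xs)"
proof -
  have "{z \<in> A. Q z} = {z \<in> set xs. z \<in> A \<and> Q z}" using assms by auto
  then show ?thesis using card_filter_list[OF assms(1)] by simp
qed

lemma card_diff_list:
  assumes "distinct xs"
  shows "card {z \<in> set xs - A. Q z} = length (filter (\<lambda>z. z \<notin> A \<and> Q z) xs)"
proof -
  have "{z \<in> set xs - A. Q z} = {z \<in> set xs. z \<notin> A \<and> Q z}" by auto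
  then show ?thesis using card_filter_list[OF assms(1)] by simp
qed

lemma sum_diff_list:
  assumes "distinct xs"
  shows "(\<Sum>x\<in>set xs - A. g x) = sum_list (map g (filter (\<lambda>x. x \<notin> A) xs))"
proof -
  have "set xs - A = set (filter (\<lambda>x. x \<notin> A) xs)" by auto
  then show ?thesis using assms by (simp add: sum_list_distinct_conv_sum_set)
qed

lemma in_rel_of: "(x, y) \<in> rel_of xs \<longleftrightarrow> lt xs x y"
  by (simp add: rel_of_def)

definition MF_l :: "'a list \<Rightarrow> 'a set \<Rightarrow> nat" where
  "MF_l xs A = Min (set (map (\<lambda>(x, y). length (filter (\<lambda>z. z \<in> A \<and> (lt xs z x \<or> lt xs y z)) xs)
        + length (filter (\<lambda>z. z \<notin> A \<and> lt xs x z \<and> lt xs z y) xs))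
      (filter (\<lambda>(x, y). x \<in> A \<and> y \<in> A \<and> (x = y \<or> lt xs x y)) (List.product xs xs))))"

definition BC_l :: "'a list \<Rightarrow> 'a set \<Rightarrow> nat" where
  "BC_l xs A = length (filter (\<lambda>b. b \<notin> A \<and> (\<exists>a\<in>A. \<exists>c\<in>A. lt xs a b \<and> lt xs b c)) xs)"

definition MS_l :: "'a list \<Rightarrow> 'a set \<Rightarrow> nat" where
  "MS_l xs A = sum_list (map (\<lambda>x. min (length (filter (\<lambda>y. y \<in> A \<and> lt xs y x) xs))
        (length (filter (\<lambda>y. y \<in> A \<and> lt xs x y) xs))) (filter (\<lambda>x. x \<notin> A) xs))"

definition FT_l :: "'a list \<Rightarrow> 'a set \<Rightarrow> nat" where
  "FT_l xs A = sum_list (map (\<lambda>x. length (filter (\<lambda>y. y \<in> A \<and> lt xs y x) xs) *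
        length (filter (\<lambda>y. y \<in> A \<and> lt xs x y) xs)) (filter (\<lambda>x. x \<notin> A) xs))"

lemma MF_eq: "distinct xs \<Longrightarrow> A \<subseteq> set xs \<Longrightarrow> cost_MF (set xs) A (rel_of xs) = MF_l xs A"
proof -
  assume d: "distinct xs" and A: "A \<subseteq> set xs"
  have S: "{(x, y). x \<in> A \<and> y \<in> A \<and> (x = y \<or> (x, y) \<in> rel_of xs)}
     = set (filter (\<lambda>(x, y). x \<in> A \<and> y \<in> A \<and> (x = y \<or> lt xs x y)) (List.product xs xs))"
    using A by (auto simp: in_rel_of)
  show ?thesis unfolding cost_MF_def MF_l_def S
    by (simp only: set_map[symmetric] card_sub_list[OF d A] card_diff_list[OF d] in_rel_of)
qed

lemma BC_eq: "distinct xs \<Longrightarrow> A \<subseteq> set xs \<Longrightarrow> cost_BC (set xs) A (rel_of xs) = BC_l xs A"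
  unfolding cost_BC_def BC_l_def in_rel_of by (rule card_diff_list)

lemma MS_eq: "distinct xs \<Longrightarrow> A \<subseteq> set xs \<Longrightarrow> cost_MS (set xs) A (rel_of xs) = MS_l xs A"
  unfolding cost_MS_def MS_l_def by (simp add: sum_diff_list card_sub_list in_rel_of)

lemma FT_eq: "distinct xs \<Longrightarrow> A \<subseteq> set xs \<Longrightarrow> cost_FT (set xs) A (rel_of xs) = FT_l xs A"
  unfolding cost_FT_def FT_l_def by (simp add: sum_diff_list card_sub_list in_rel_of)

lemma perms_complete:
  assumes "distinct L" "distinct xs" "set xs = set L"
  shows "xs \<in> set (permutations_of_list_impl L)"
proof -
  have "xs \<in> permutations_of_set (set L)" using assms by auto
  then show ?thesis
    by (simp add: set_permutations_of_list_impl permutations_of_set_altdef mset_set_set assms(1))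
qed

lemma perms_sound:
  assumes "distinct L" "xs \<in> set (permutations_of_list_impl L)"
  shows "distinct xs \<and> set xs = set L"
proof -
  have "xs \<in> permutations_of_set (set L)"
    using assms by (simp add: set_permutations_of_list_impl permutations_of_set_altdef mset_set_set)
  then show ?thesis by (auto dest: permutations_of_setD)
qed

lemma counterexample:
  fixes cost :: "'a set \<Rightarrow> 'a set \<Rightarrow> ('a \<times> 'a) set \<Rightarrow> nat" and cl :: "'a list \<Rightarrow> 'a set \<Rightarrow> nat"
  assumes eq: "\<And>xs A. distinct xs \<Longrightarrow> A \<subseteq> set xs \<Longrightarrow> cost (set xs) A (rel_of xs) = cl xs A"
    and dL: "distinct L" and PA: "\<forall>B\<in>set (P @ [A]). B \<subseteq> set L"
    and w: "u \<in> set (permutations_of_list_impl L)" "v \<in> set (permutations_of_list_impl L)"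
    and chk: "\<forall>xs \<in> set (permutations_of_list_impl L).
        sum_list (map (cl u) P) < sum_list (map (cl xs) P)
      \<or> sum_list (map (cl v) (P @ [A])) < sum_list (map (cl xs) (P @ [A]))"
  shows "scoring_rule cost (set L) P \<inter> scoring_rule cost (set L) (P @ [A]) = {}"
proof -
  have tc: "total_cost cost (set L) Q (rel_of xs) = sum_list (map (cl xs) Q)"
    if "xs \<in> set (permutations_of_list_impl L)" "\<forall>B\<in>set Q. B \<subseteq> set L" for xs Q
  proof -
    have "distinct xs" "set xs = set L" using perms_sound[OF dL that(1)] by auto
    then show ?thesis unfolding total_cost_def using that(2)
      by (metis (no_types, lifting) eq map_eq_conv)
  qed
  have PL: "\<forall>B\<in>set P. B \<subseteq> set L" using PA by auto
  have ax: "rel_of x \<in> axes (set L)" if "x \<in> set (permutations_of_list_impl L)" for x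
    using perms_sound[OF dL that] rel_of_axes by metis
  show ?thesis
  proof (rule ccontr)
    assume "\<not> ?thesis"
    then obtain r where r1: "r \<in> scoring_rule cost (set L) P" and r2: "r \<in> scoring_rule cost (set L) (P @ [A])"
      by auto
    then have "r \<in> axes (set L)" by (auto simp: scoring_rule_def)
    then obtain xs where xs: "distinct xs" "set xs = set L" "r = rel_of xs"
      using axes_list by blast
    then have xsp: "xs \<in> set (permutations_of_list_impl L)" using perms_complete dL by blast
    have "total_cost cost (set L) P r \<le> total_cost cost (set L) P (rel_of u)"
      using r1 ax[OF w(1)] by (auto simp: scoring_rule_def)
    moreover have "total_cost cost (set L) (P @ [A]) r \<le> total_cost cost (set L) (P @ [A]) (rel_of v)"
      using r2 ax[OF w(2)] by (auto simp: scoring_rule_def)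
    ultimately show False using chk xsp tc[OF xsp PL] tc[OF xsp PA] tc[OF w(1) PL] tc[OF w(2) PA] xs(3)
      by fastforce
  qed
qed

lemma ex_MF: "\<exists>(C :: nat set) P A. finite C \<and> is_profile C P \<and> is_ballot C A \<and>
              scoring_rule cost_MF C P \<inter> scoring_rule cost_MF C (P @ [A]) = {}"
proof -
  have "scoring_rule cost_MF (set [0,1,2,3,4]) [{0,1},{0,2},{1,3},{0,2,4}]
      \<inter> scoring_rule cost_MF (set [0,1,2,3,4]) ([{0,1},{0,2},{1,3},{0,2,4}] @ [{0,3,4::nat}]) = {}"
    apply (rule counterexample[where cl = MF_l and u = "[3,1,0,2,4]" and v = "[1,3,4,0,2]"])
    apply (erule (1) MF_eq)
    apply simp
    apply simp
    apply code_simp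
    apply code_simp
    apply code_simp
    done
  then show ?thesis
    by (intro exI[of _ "set [0,1,2,3,4::nat]"] exI[of _ "[{0,1},{0,2},{1,3},{0,2,4}]"] exI[of _ "{0,3,4::nat}"])
       (simp add: is_profile_def is_ballot_def)
qed

lemma ex_BC: "\<exists>(C :: nat set) P A. finite C \<and> is_profile C P \<and> is_ballot C A \<and>
              scoring_rule cost_BC C P \<inter> scoring_rule cost_BC C (P @ [A]) = {}"
proof -
  have "scoring_rule cost_BC (set [0,1,2,3]) [{0,1,2},{0,1,3::nat}]
      \<inter> scoring_rule cost_BC (set [0,1,2,3]) ([{0,1,2},{0,1,3::nat}] @ [{2,3::nat}]) = {}"
    apply (rule counterexample[where cl = BC_l and u = "[2,0,1,3]" and v = "[0,1,2,3]"])
    apply (erule (1) BC_eq)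
    apply simp
    apply simp
    apply code_simp
    apply code_simp
    apply code_simp
    done
  then show ?thesis
    by (intro exI[of _ "set [0,1,2,3::nat]"] exI[of _ "[{0,1,2},{0,1,3::nat}]"] exI[of _ "{2,3::nat}"])
       (simp add: is_profile_def is_ballot_def)
qed

lemma ex_MS: "\<exists>(C :: nat set) P A. finite C \<and> is_profile C P \<and> is_ballot C A \<and>
              scoring_rule cost_MS C P \<inter> scoring_rule cost_MS C (P @ [A]) = {}"
proof -
  have "scoring_rule cost_MS (set [0,1,2,3]) [{0,1,2},{0,1,3::nat}]
      \<inter> scoring_rule cost_MS (set [0,1,2,3]) ([{0,1,2},{0,1,3::nat}] @ [{2,3::nat}]) = {}"
    apply (rule counterexample[where cl = MS_l and u = "[2,0,1,3]" and v = "[0,1,2,3]"])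
    apply (erule (1) MS_eq)
    apply simp
    apply simp
    apply code_simp
    apply code_simp
    apply code_simp
    done
  then show ?thesis
    by (intro exI[of _ "set [0,1,2,3::nat]"] exI[of _ "[{0,1,2},{0,1,3::nat}]"] exI[of _ "{2,3::nat}"])
       (simp add: is_profile_def is_ballot_def)
qed

lemma ex_FT: "\<exists>(C :: nat set) P A. finite C \<and> is_profile C P \<and> is_ballot C A \<and>
              scoring_rule cost_FT C P \<inter> scoring_rule cost_FT C (P @ [A]) = {}"
proof -
  have "scoring_rule cost_FT (set [0,1,2,3]) [{0,1},{0,2::nat}]
      \<inter> scoring_rule cost_FT (set [0,1,2,3]) ([{0,1},{0,2::nat}] @ [{1,2,3::nat}]) = {}"
    apply (rule counterexample[where cl = FT_l and u = "[1,0,2,3]" and v = "[0,1,2,3]"])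
    apply (erule (1) FT_eq)
    apply simp
    apply simp
    apply code_simp
    apply code_simp
    apply code_simp
    done
  then show ?thesis
    by (intro exI[of _ "set [0,1,2,3::nat]"] exI[of _ "[{0,1},{0,2::nat}]"] exI[of _ "{1,2,3::nat}"])
       (simp add: is_profile_def is_ballot_def)
qed

theorem mainTheorem5:
  shows "(\<forall>(C :: 'a set) P A. finite C \<longrightarrow> is_profile C P \<longrightarrow> is_ballot C A \<longrightarrow>
            scoring_rule cost_VD C P \<inter> scoring_rule cost_VD C (P @ [A]) \<noteq> {})
       \<and> (\<forall>cost \<in> {cost_MF, cost_BC, cost_MS, cost_FT}.
            \<exists>(C :: nat set) P A. finite C \<and> is_profile C P \<and> is_ballot C A \<and>
              scoring_rule cost C P \<inter> scoring_rule cost C (P @ [A]) = {})"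
  using VD_stable ex_MF ex_BC ex_MS ex_FT by auto

end
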